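(* Let $N$ be a prime, and for each $r\in\mathbb{Z}$ with $2\le|r|<\frac12N$, let $\gamma_{r,1}\in\Gamma_0(N)$ be a matrix with top row $\begin{pmatrix} r&-1\end{pmatrix}$. Then any matrix $\begin{pmatrix} A & B \\ CN & D \end{pmatrix} \in \Gamma_0(N)$ (with $A,B,C,D\in\mathbb{Z}$) may be written in the form $\pm\tau_1\tau_2\cdots\tau_l$ with $\tau_i\in\{T,T^{-1},W,W^{-1},\gamma_{r,1}^{-1}:2\le|r|<\frac12N\}$ for each $i=1,\ldots,l$, in such a way that $$\#\{i:\tau_i\in\{\gamma_{r,1}^{-1}\}\}\le\log_2(|A|).$$
   Context: Here $T=\begin{pmatrix}1&1\\0&1\end{pmatrix}$, $W=\begin{pmatrix}1&0\\N&1\end{pmatrix}$, and $\Gamma_0(N)$ is the usual Hecke congruence subgroup of $\mathrm{SL}_2(\mathbb{Z})$ consisting of matrices with lower-left entry divisible by $N$. *)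

theory Defs
  imports Complex_Main "HOL-Computational_Algebra.Primes"
begin

text \<open>2x2 integer matrices (a b; c d) represented as tuples (a, b, c, d).\<close>
type_synonym mat2 = "int \<times> int \<times> int \<times> int"

fun m2mult :: "mat2 \<Rightarrow> mat2 \<Rightarrow> mat2" where
  "m2mult (a, b, c, d) (e, f, g, h) = (a*e + b*g, a*f + b*h, c*e + d*g, c*f + d*h)"

definition m2id :: mat2 where "m2id = (1, 0, 0, 1)"

fun m2neg :: "mat2 \<Rightarrow> mat2" where
  "m2neg (a, b, c, d) = (-a, -b, -c, -d)"

fun m2det :: "mat2 \<Rightarrow> int" where
  "m2det (a, b, c, d) = a*d - b*c"

fun sl2inv :: "mat2 \<Rightarrow> mat2" where
  "sl2inv (a, b, c, d) = (d, -b, -c, a)"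

definition m2prod :: "mat2 list \<Rightarrow> mat2" where
  "m2prod xs = foldr m2mult xs m2id"

definition Gamma0 :: "int \<Rightarrow> mat2 set" where
  "Gamma0 N = {(a, b, c, d). a*d - b*c = 1 \<and> N dvd c}"

definition matT :: mat2 where "matT = (1, 1, 0, 1)"
definition matW :: "int \<Rightarrow> mat2" where "matW N = (1, 0, N, 1)"

fun m2topleft :: "mat2 \<Rightarrow> int" where
  "m2topleft (a, b, c, d) = a"

end

theory Submission
  imports Defs
begin

lemma m2mult_assoc: "m2mult (m2mult x y) z = m2mult x (m2mult y z)"
  by (cases x; cases y; cases z) (simp add: algebra_simps)

lemma m2mult_neg_right: "m2mult x (m2neg y) = m2neg (m2mult x y)"
  by (cases x; cases y) (simp add: algebra_simps)

lemma m2mult_neg_left: "m2mult (m2neg x) y = m2neg (m2mult x y)"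
  by (cases x; cases y) (simp add: algebra_simps)

lemma m2neg_neg: "m2neg (m2neg x) = x"
  by (cases x) simp

lemma sl2inv_mult: "sl2inv (m2mult x y) = m2mult (sl2inv y) (sl2inv x)"
  by (cases x; cases y) (simp add: algebra_simps)

lemma sl2inv_sl2inv: "sl2inv (sl2inv x) = x"
  by (cases x) simp

lemma inv_cancel: "m2det g = 1 \<Longrightarrow> m2mult (sl2inv g) (m2mult g M) = M"
proof -
  assume h: "m2det g = 1"
  obtain a b c d where g: "g = (a,b,c,d)" by (cases g)
  obtain x y z w where M: "M = (x,y,z,w)" by (cases M)
  have e: "a*d - b*c = 1" using h g by simp
  have f: "\<And>u. d*(a*u) + -b*(c*u) = (a*d - b*c)*u" "\<And>u. -c*(b*u) + a*(d*u) = (a*d - b*c)*u"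
    by (simp_all add: algebra_simps)
  have "m2mult (sl2inv g) (m2mult g M) =
     (d*(a*x + b*z) + -b*(c*x + d*z), d*(a*y + b*w) + -b*(c*y + d*w),
      -c*(a*x + b*z) + a*(c*x + d*z), -c*(a*y + b*w) + a*(c*y + d*w))"
    using g M by simp
  also have "\<dots> = ((a*d - b*c)*x, (a*d - b*c)*y, (a*d - b*c)*z, (a*d - b*c)*w)"
    by (simp add: algebra_simps)
  finally show ?thesis using e M by simp
qed

definition Tp :: "int \<Rightarrow> mat2" where "Tp j = (1, j, 0, 1)"
definition Wp :: "int \<Rightarrow> int \<Rightarrow> mat2" where "Wp N j = (1, 0, j*N, 1)"

definition Gs :: "int \<Rightarrow> (int \<Rightarrow> mat2) \<Rightarrow> mat2 set" where
  "Gs N \<gamma> = {sl2inv (\<gamma> r) | r. 2 \<le> \<bar>r\<bar> \<and> 2 * \<bar>r\<bar> < N}"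

definition Gens0 :: "int \<Rightarrow> mat2 set" where
  "Gens0 N = {matT, sl2inv matT, matW N, sl2inv (matW N)}"

definition rep :: "int \<Rightarrow> (int \<Rightarrow> mat2) \<Rightarrow> mat2 \<Rightarrow> nat \<Rightarrow> bool" where
  "rep N \<gamma> M k \<longleftrightarrow> (\<exists>\<tau>s. set \<tau>s \<subseteq> Gens0 N \<union> Gs N \<gamma> \<and>
      (M = m2prod \<tau>s \<or> M = m2neg (m2prod \<tau>s)) \<and>
      length (filter (\<lambda>t. t \<in> Gs N \<gamma>) \<tau>s) \<le> k)"

lemma rep_id: "rep N \<gamma> m2id 0"
  unfolding rep_def by (rule exI[of _ "[]"]) (simp add: m2prod_def)

lemma rep_neg: "rep N \<gamma> M k \<Longrightarrow> rep N \<gamma> (m2neg M) k"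
  unfolding rep_def by (metis m2neg_neg)

lemma rep_cons0:
  assumes "g \<in> Gens0 N" "g \<notin> Gs N \<gamma>" "rep N \<gamma> M k"
  shows "rep N \<gamma> (m2mult g M) k"
proof -
  obtain \<tau>s where t: "set \<tau>s \<subseteq> Gens0 N \<union> Gs N \<gamma>"
    "M = m2prod \<tau>s \<or> M = m2neg (m2prod \<tau>s)"
    "length (filter (\<lambda>t. t \<in> Gs N \<gamma>) \<tau>s) \<le> k"
    using assms(3) unfolding rep_def by blast
  show ?thesis unfolding rep_def
    apply (rule exI[of _ "g # \<tau>s"])
    using t assms(1,2) by (auto simp: m2prod_def m2mult_neg_right)
qed

lemma rep_consG:
  assumes "g \<in> Gs N \<gamma>" "rep N \<gamma> M k"
  shows "rep N \<gamma> (m2mult g M) (Suc k)"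
proof -
  obtain \<tau>s where t: "set \<tau>s \<subseteq> Gens0 N \<union> Gs N \<gamma>"
    "M = m2prod \<tau>s \<or> M = m2neg (m2prod \<tau>s)"
    "length (filter (\<lambda>t. t \<in> Gs N \<gamma>) \<tau>s) \<le> k"
    using assms(2) unfolding rep_def by blast
  show ?thesis unfolding rep_def
    apply (rule exI[of _ "g # \<tau>s"])
    using t assms(1) by (auto simp: m2prod_def m2mult_neg_right)
qed


lemma Gamma0_mult: "x \<in> Gamma0 N \<Longrightarrow> y \<in> Gamma0 N \<Longrightarrow> m2mult x y \<in> Gamma0 N"
proof -
  assume x: "x \<in> Gamma0 N" and y: "y \<in> Gamma0 N"
  obtain a b c d where X: "x = (a,b,c,d)" by (cases x)
  obtain e f g h where Y: "y = (e,f,g,h)" by (cases y)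
  have d1: "a*d - b*c = 1" "e*h - f*g = 1" "N dvd c" "N dvd g" using x y X Y by (auto simp: Gamma0_def)
  have "(a*e + b*g)*(c*f + d*h) - (a*f + b*h)*(c*e + d*g) = (a*d - b*c)*(e*h - f*g)"
    by (simp add: algebra_simps)
  then have "(a*e + b*g)*(c*f + d*h) - (a*f + b*h)*(c*e + d*g) = 1" using d1 by simp
  moreover have "N dvd c*e + d*g" using d1 by simp
  ultimately show ?thesis using X Y by (simp add: Gamma0_def)
qed

lemma Tp_G: "Tp j \<in> Gamma0 N" by (simp add: Tp_def Gamma0_def)
lemma Wp_G: "Wp N j \<in> Gamma0 N" by (simp add: Wp_def Gamma0_def)
lemma Tp_inv: "sl2inv (Tp j) = Tp (-j)" by (simp add: Tp_def)
lemma Wp_inv: "sl2inv (Wp N j) = Wp N (-j)" by (simp add: Wp_def)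
lemma Tp_det: "m2det (Tp j) = 1" by (simp add: Tp_def)
lemma Wp_det: "m2det (Wp N j) = 1" by (simp add: Wp_def)

lemma Gamma0_det: "x \<in> Gamma0 N \<Longrightarrow> m2det x = 1"
  by (cases x) (simp add: Gamma0_def)

lemma Gamma0_ne: "N \<ge> 2 \<Longrightarrow> (a,b,c,d) \<in> Gamma0 N \<Longrightarrow> a \<noteq> 0"
proof
  assume N: "N \<ge> 2" and G: "(a,b,c,d) \<in> Gamma0 N" and a: "a = 0"
  then have "c * (-b) = 1" "N dvd c" by (auto simp: Gamma0_def algebra_simps)
  then have "N dvd 1" by (metis dvd_mult_right dvd_trans dvd_triv_left)
  then show False using N by simp
qed

lemma half_lt: "0 < (y::int) \<Longrightarrow> 2*x \<le> y \<Longrightarrow> 0 \<le> x \<Longrightarrow> x < y" by linarith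

lemma round_ex_pos: "(a::int) > 0 \<Longrightarrow> \<exists>t. 2*\<bar>t*a - c\<bar> \<le> \<bar>a\<bar>"
proof -
  assume a: "a > 0"
  define q where "q = (2*c + a) div (2*a)"
  define m where "m = (2*c + a) mod (2*a)"
  have e: "2*c + a = 2*a*q + m" unfolding q_def m_def by (simp add: mult.commute)
  have m: "0 \<le> m" "m < 2*a" unfolding m_def using a by auto
  have "2*(q*a - c) = a - m" using e by (simp add: algebra_simps)
  then have "2*\<bar>q*a - c\<bar> \<le> \<bar>a\<bar>" using m a by (simp add: abs_if)
  then show ?thesis by blast
qed

lemma round_ex: "(a::int) \<noteq> 0 \<Longrightarrow> \<exists>t. 2*\<bar>t*a - c\<bar> \<le> \<bar>a\<bar>"
proof (cases "a > 0")
  case True then show ?thesis using round_ex_pos by blast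
next
  case False
  assume "a \<noteq> 0"
  then have "-a > 0" using False by simp
  from round_ex_pos[OF this, of "-c"] obtain t where "2*\<bar>t*(-a) - (-c)\<bar> \<le> \<bar>-a\<bar>" by blast
  then have "2*\<bar>t*a - c\<bar> \<le> \<bar>a\<bar>" by (simp add: abs_minus_commute)
  then show ?thesis by blast
qed

lemma step_X:
  assumes X: "X \<in> Gamma0 N" "fst X = r" "fst (snd X) = -1"
    and M: "M = (a,b,c,d)" "M \<in> Gamma0 N"
    and t: "t = r - kk*N"
  shows "m2mult (m2mult X (Wp N kk)) M \<in> Gamma0 N"
    "m2topleft (m2mult (m2mult X (Wp N kk)) M) = t*a - c"
    "M = m2mult (Wp N (-kk)) (m2mult (sl2inv X) (m2mult (m2mult X (Wp N kk)) M))"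
proof -
  show "m2mult (m2mult X (Wp N kk)) M \<in> Gamma0 N"
    using X M by (intro Gamma0_mult Wp_G) auto
  obtain x1 x2 x3 x4 where Xe: "X = (x1,x2,x3,x4)" by (cases X)
  show "m2topleft (m2mult (m2mult X (Wp N kk)) M) = t*a - c"
    unfolding t using X Xe M by (simp add: Wp_def algebra_simps)
  have G: "m2mult X (Wp N kk) \<in> Gamma0 N" using X by (intro Gamma0_mult Wp_G) auto
  have "M = m2mult (sl2inv (m2mult X (Wp N kk))) (m2mult (m2mult X (Wp N kk)) M)"
    using inv_cancel[OF Gamma0_det[OF G]] by simp
  also have "\<dots> = m2mult (Wp N (-kk)) (m2mult (sl2inv X) (m2mult (m2mult X (Wp N kk)) M))"
    by (simp add: sl2inv_mult Wp_inv m2mult_assoc)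
  finally show "M = m2mult (Wp N (-kk)) (m2mult (sl2inv X) (m2mult (m2mult X (Wp N kk)) M))" .
qed

context
  fixes N :: int and \<gamma> :: "int \<Rightarrow> mat2"
  assumes H: "\<And>r. 2 \<le> \<bar>r\<bar> \<Longrightarrow> 2 * \<bar>r\<bar> < N \<Longrightarrow>
           \<gamma> r \<in> Gamma0 N \<and> fst (\<gamma> r) = r \<and> fst (snd (\<gamma> r)) = -1"
begin

lemma notGs:
  assumes "sl2inv (\<gamma> r) = (x, y, z, w)" "2 \<le> \<bar>r\<bar>" "2 * \<bar>r\<bar> < N"
  shows "y = 1 \<and> w = r"
proof -
  obtain a b c d where g: "\<gamma> r = (a,b,c,d)" by (cases "\<gamma> r")
  from H[OF assms(2,3)] g assms(1) show ?thesis by auto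
qed

lemma gens_ok:
  "rep N \<gamma> M k \<Longrightarrow> rep N \<gamma> (m2mult matT M) k"
  "rep N \<gamma> M k \<Longrightarrow> rep N \<gamma> (m2mult (sl2inv matT) M) k"
  "rep N \<gamma> M k \<Longrightarrow> rep N \<gamma> (m2mult (matW N) M) k"
  "rep N \<gamma> M k \<Longrightarrow> rep N \<gamma> (m2mult (sl2inv (matW N)) M) k"
  subgoal by (rule rep_cons0) (auto simp: Gens0_def matT_def Gs_def dest: notGs[OF sym])
  subgoal by (rule rep_cons0) (auto simp: Gens0_def matT_def Gs_def dest: notGs[OF sym])
  subgoal by (rule rep_cons0) (auto simp: Gens0_def matW_def Gs_def dest: notGs[OF sym])
  subgoal by (rule rep_cons0) (auto simp: Gens0_def matW_def Gs_def dest: notGs[OF sym])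
  done

lemma rep_Tp_nat:
  "rep N \<gamma> M k \<Longrightarrow> rep N \<gamma> (m2mult (Tp (int n)) M) k \<and> rep N \<gamma> (m2mult (Tp (- int n)) M) k"
proof (induction n)
  case 0
  then show ?case by (cases M) (simp add: Tp_def)
next
  case (Suc n)
  have e1: "m2mult (Tp (int (Suc n))) M = m2mult matT (m2mult (Tp (int n)) M)"
    by (cases M) (simp add: Tp_def matT_def algebra_simps)
  have e2: "m2mult (Tp (- int (Suc n))) M = m2mult (sl2inv matT) (m2mult (Tp (- int n)) M)"
    by (cases M) (simp add: Tp_def matT_def algebra_simps)
  show ?case using Suc gens_ok e1 e2 by simp
qed

lemma rep_Tp: "rep N \<gamma> M k \<Longrightarrow> rep N \<gamma> (m2mult (Tp j) M) k"
  using rep_Tp_nat[of M k "nat \<bar>j\<bar>"] by (cases "j \<ge> 0") auto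

lemma rep_Wp_nat:
  "rep N \<gamma> M k \<Longrightarrow> rep N \<gamma> (m2mult (Wp N (int n)) M) k \<and> rep N \<gamma> (m2mult (Wp N (- int n)) M) k"
proof (induction n)
  case 0
  then show ?case by (cases M) (simp add: Wp_def)
next
  case (Suc n)
  have e1: "m2mult (Wp N (int (Suc n))) M = m2mult (matW N) (m2mult (Wp N (int n)) M)"
    by (cases M) (simp add: Wp_def matW_def algebra_simps)
  have e2: "m2mult (Wp N (- int (Suc n))) M = m2mult (sl2inv (matW N)) (m2mult (Wp N (- int n)) M)"
    by (cases M) (simp add: Wp_def matW_def algebra_simps)
  show ?case using Suc gens_ok e1 e2 by simp
qed

lemma rep_Wp: "rep N \<gamma> M k \<Longrightarrow> rep N \<gamma> (m2mult (Wp N j) M) k"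
  using rep_Wp_nat[of M k "nat \<bar>j\<bar>"] by (cases "j \<ge> 0") auto


lemma main:
  assumes P: "prime N"
  shows "M \<in> Gamma0 N \<Longrightarrow> \<exists>k. rep N \<gamma> M k \<and> 2^k \<le> \<bar>m2topleft M\<bar>"
proof (induction "nat \<bar>m2topleft M\<bar>" arbitrary: M rule: less_induct)
  case less
  obtain a b c d where M: "M = (a,b,c,d)" by (cases M)
  have N2: "N \<ge> 2" using P by (simp add: prime_ge_2_int)
  have a0: "a \<noteq> 0" using Gamma0_ne[OF N2] less.prems M by simp
  have det: "a*d - b*c = 1" and Nc: "N dvd c" using less.prems M by (auto simp: Gamma0_def)
  obtain C where C: "c = N*C" using Nc by (auto simp: dvd_def)
  show ?case
  proof (cases "\<bar>a\<bar> = 1")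
    case True
    show ?thesis
    proof (cases "a = 1")
      case a1: True
      have "M = m2mult (Wp N C) (m2mult (Tp b) m2id)"
        using M a1 det C by (simp add: Wp_def Tp_def m2id_def algebra_simps)
      then have "rep N \<gamma> M 0" using rep_Wp[OF rep_Tp[OF rep_id]] by simp
      then show ?thesis using M a1 by (intro exI[of _ 0]) simp
    next
      case False
      then have a1: "a = -1" using True by auto
      have "M = m2neg (m2mult (Wp N (-C)) (m2mult (Tp (-b)) m2id))"
        using M a1 det C by (simp add: Wp_def Tp_def m2id_def algebra_simps)
      then have "rep N \<gamma> M 0" using rep_neg[OF rep_Wp[OF rep_Tp[OF rep_id]]] by simp
      then show ?thesis using M a1 by (intro exI[of _ 0]) simp
    qed
  next
    case False
    then have a2: "\<bar>a\<bar> \<ge> 2" using a0 by auto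
    obtain t where t: "2*\<bar>t*a - c\<bar> \<le> \<bar>a\<bar>" using round_ex[OF a0] by blast
    show ?thesis
    proof (cases "N dvd t")
      case True
      then obtain m where m: "t = N*m" by (auto simp: dvd_def)
      define M1 where "M1 = m2mult (Wp N (-m)) M"
      define c1 where "c1 = c - m*N*a"
      define d1 where "d1 = d - m*N*b"
      have M1: "M1 = (a, b, c1, d1)" unfolding M1_def c1_def d1_def using M
        by (simp add: Wp_def algebra_simps)
      have M1G: "M1 \<in> Gamma0 N" unfolding M1_def using less.prems by (intro Gamma0_mult Wp_G)
      have c1e: "c1 = -(t*a - c)" unfolding c1_def using m by (simp add: algebra_simps)
      have "c1 \<noteq> 0"
      proof
        assume "c1 = 0"
        then have "a*d1 = 1" using M1G M1 by (simp add: Gamma0_def)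
        then have "a dvd 1" by (metis dvd_triv_left)
        then show False using a2 by simp
      qed
      define j where "j = -(a div c1)"
      define M2 where "M2 = m2mult (Tp j) M1"
      have a2e: "m2topleft M2 = a mod c1" unfolding M2_def j_def using M1
        by (simp add: Tp_def algebra_simps minus_div_mult_eq_mod)
      have "\<bar>a mod c1\<bar> < \<bar>c1\<bar>" using \<open>c1 \<noteq> 0\<close> by (rule abs_mod_less)
      moreover have "\<bar>c1\<bar> = \<bar>t*a - c\<bar>" using c1e by simp
      moreover have "\<bar>m2topleft M2\<bar> = \<bar>a mod c1\<bar>" using a2e by simp
      ultimately have lt: "\<bar>m2topleft M2\<bar> < \<bar>a\<bar>" using t abs_ge_zero[of c1] by linarith
      have M2G: "M2 \<in> Gamma0 N" unfolding M2_def using M1G by (intro Gamma0_mult Tp_G)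
      have "nat \<bar>m2topleft M2\<bar> < nat \<bar>m2topleft M\<bar>" using lt M by simp
      from less.hyps[OF this M2G] obtain k where k: "rep N \<gamma> M2 k" "2^k \<le> \<bar>m2topleft M2\<bar>" by blast
      have "M1 = m2mult (Tp (-j)) M2" unfolding M2_def
        using inv_cancel[OF Tp_det, of j M1] by (simp add: Tp_inv)
      moreover have "M = m2mult (Wp N m) M1" unfolding M1_def
        using inv_cancel[OF Wp_det, of N "-m" M] by (simp add: Wp_inv)
      ultimately have "rep N \<gamma> M k" using rep_Wp[OF rep_Tp[OF k(1)]] by simp
      then show ?thesis using k(2) lt M by (intro exI[of _ k]) simp
    next
      case False
      define r0 where "r0 = t mod N"
      have r0: "0 \<le> r0" "r0 < N" unfolding r0_def using N2 by auto
      have r00: "r0 \<noteq> 0" unfolding r0_def using False by (simp add: dvd_eq_mod_eq_0)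
      define r where "r = (if 2*r0 < N then r0 else r0 - N)"
      have "N dvd (r - t)" unfolding r_def r0_def
        by (simp add: mod_eq_dvd_iff[symmetric] mod_diff_right_eq[symmetric] mod_diff_cong)
      then obtain kk where kk: "r - t = N*kk" by (auto simp: dvd_def)
      have tr: "t = r - kk*N" using kk by (simp add: algebra_simps)
      have rb: "r \<noteq> 0" "2*\<bar>r\<bar> \<le> N" unfolding r_def using r0 r00 by auto
      have r1: "\<bar>r\<bar> = 1 \<or> (2 \<le> \<bar>r\<bar> \<and> 2*\<bar>r\<bar> < N)"
      proof (cases "2*\<bar>r\<bar> = N")
        case True
        then have "2 dvd N" by auto
        then have "N = 2" using P primes_dvd_imp_eq[of 2 N] by simp
        then show ?thesis using True by auto
      next
        case False then show ?thesis using rb by auto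
      qed
      have key: "\<exists>k. rep N \<gamma> M k \<and> 2^k \<le> \<bar>m2topleft M\<bar>"
        if X: "X \<in> Gamma0 N" "fst X = r" "fst (snd X) = -1"
        and cl: "\<And>M' k. rep N \<gamma> M' k \<Longrightarrow> 2^k \<le> \<bar>m2topleft M'\<bar> \<Longrightarrow>
                   \<exists>k'. rep N \<gamma> (m2mult (sl2inv X) M') k' \<and> 2^k' \<le> 2*\<bar>m2topleft M'\<bar>"
        for X
      proof -
        note st = step_X[OF X M less.prems tr]
        define M' where "M' = m2mult (m2mult X (Wp N kk)) M"
        have tl: "m2topleft M' = t*a - c" using st(2) M'_def by simp
        have lt: "\<bar>m2topleft M'\<bar> < \<bar>a\<bar>" proof -
          have "0 < \<bar>a\<bar>" using a0 by simp
          then have "\<bar>t*a - c\<bar> < \<bar>a\<bar>" using t abs_ge_zero[of "t*a - c"] half_lt by blast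
          then show ?thesis using tl by simp
        qed
        have "nat \<bar>m2topleft M'\<bar> < nat \<bar>m2topleft M\<bar>" using lt M by simp
        from less.hyps[OF this st(1)[folded M'_def]] obtain k where
          k: "rep N \<gamma> M' k" "2^k \<le> \<bar>m2topleft M'\<bar>" by blast
        from cl[OF k] obtain k' where k': "rep N \<gamma> (m2mult (sl2inv X) M') k'"
          "2^k' \<le> 2*\<bar>m2topleft M'\<bar>" by blast
        have "rep N \<gamma> M k'" using rep_Wp[OF k'(1)] st(3)[folded M'_def] by simp
        then show ?thesis using k'(2) tl t M by (intro exI[of _ k']) simp
      qed
      show ?thesis
      proof (cases "r = 1")
        case True
        show ?thesis
        proof (rule key[of "sl2inv matT"])
          show "sl2inv matT \<in> Gamma0 N" "fst (sl2inv matT) = r" "fst (snd (sl2inv matT)) = -1"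
            using True by (auto simp: matT_def Gamma0_def)
          fix M' k assume k: "rep N \<gamma> M' k" "2^k \<le> \<bar>m2topleft M'\<bar>"
          have "rep N \<gamma> (m2mult (sl2inv (sl2inv matT)) M') k"
            unfolding sl2inv_sl2inv by (rule gens_ok(1)[OF k(1)])
          moreover have "(2::int)^k \<le> 2*\<bar>m2topleft M'\<bar>" using k(2) abs_ge_zero[of "m2topleft M'"] by linarith
          ultimately show "\<exists>k'. rep N \<gamma> (m2mult (sl2inv (sl2inv matT)) M') k' \<and> 2^k' \<le> 2*\<bar>m2topleft M'\<bar>"
            by blast
        qed
      next
        case rn1: False
        show ?thesis
        proof (cases "r = -1")
          case True
          show ?thesis
          proof (rule key[of "m2neg matT"])
            show "m2neg matT \<in> Gamma0 N" "fst (m2neg matT) = r" "fst (snd (m2neg matT)) = -1"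
              using True by (auto simp: matT_def Gamma0_def)
            fix M' k assume k: "rep N \<gamma> M' k" "2^k \<le> \<bar>m2topleft M'\<bar>"
            have e: "sl2inv (m2neg matT) = m2neg (sl2inv matT)" by (simp add: matT_def)
            have "rep N \<gamma> (m2mult (sl2inv (m2neg matT)) M') k"
              unfolding e m2mult_neg_left by (rule rep_neg[OF gens_ok(2)[OF k(1)]])
            moreover have "(2::int)^k \<le> 2*\<bar>m2topleft M'\<bar>" using k(2) abs_ge_zero[of "m2topleft M'"] by linarith
            ultimately show "\<exists>k'. rep N \<gamma> (m2mult (sl2inv (m2neg matT)) M') k' \<and> 2^k' \<le> 2*\<bar>m2topleft M'\<bar>"
              by blast
          qed
        next
          case False
          then have rg: "2 \<le> \<bar>r\<bar>" "2*\<bar>r\<bar> < N" using r1 rn1 by auto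
          show ?thesis
          proof (rule key[of "\<gamma> r"])
            show "\<gamma> r \<in> Gamma0 N" "fst (\<gamma> r) = r" "fst (snd (\<gamma> r)) = -1" using H[OF rg] by auto
            fix M' k assume k: "rep N \<gamma> M' k" "2^k \<le> \<bar>m2topleft M'\<bar>"
            have "sl2inv (\<gamma> r) \<in> Gs N \<gamma>" unfolding Gs_def using rg by blast
            from rep_consG[OF this k(1)] k(2)
            show "\<exists>k'. rep N \<gamma> (m2mult (sl2inv (\<gamma> r)) M') k' \<and> 2^k' \<le> 2*\<bar>m2topleft M'\<bar>"
              by (intro exI[of _ "Suc k"]) simp
          qed
        qed
      qed
    qed
  qed
qed

end

theorem lemma4p7:
  fixes N :: int and \<gamma> :: "int \<Rightarrow> mat2" and A B C D :: int
  assumes "prime N"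
    and "\<And>r. 2 \<le> \<bar>r\<bar> \<Longrightarrow> 2 * \<bar>r\<bar> < N \<Longrightarrow>
           \<gamma> r \<in> Gamma0 N \<and> fst (\<gamma> r) = r \<and> fst (snd (\<gamma> r)) = -1"
    and "(A, B, C * N, D) \<in> Gamma0 N"
  shows "\<exists>\<tau>s :: mat2 list.
    set \<tau>s \<subseteq> {matT, sl2inv matT, matW N, sl2inv (matW N)} \<union>
               {sl2inv (\<gamma> r) | r. 2 \<le> \<bar>r\<bar> \<and> 2 * \<bar>r\<bar> < N}
    \<and> ((A, B, C * N, D) = m2prod \<tau>s \<or> (A, B, C * N, D) = m2neg (m2prod \<tau>s))
    \<and> real (length (filter (\<lambda>t. t \<in> {sl2inv (\<gamma> r) | r. 2 \<le> \<bar>r\<bar> \<and> 2 * \<bar>r\<bar> < N}) \<tau>s))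
        \<le> log 2 \<bar>A\<bar>"
proof -
  obtain k where k: "rep N \<gamma> (A, B, C * N, D) k" "2^k \<le> \<bar>A\<bar>"
    using main[OF assms(2) assms(1) assms(3)] by auto
  obtain \<tau>s where t: "set \<tau>s \<subseteq> Gens0 N \<union> Gs N \<gamma>"
    "(A, B, C * N, D) = m2prod \<tau>s \<or> (A, B, C * N, D) = m2neg (m2prod \<tau>s)"
    "length (filter (\<lambda>t. t \<in> Gs N \<gamma>) \<tau>s) \<le> k"
    using k(1) unfolding rep_def by blast
  have "(2::real)^k \<le> real_of_int \<bar>A\<bar>"
  proof -
    have "real_of_int ((2::int)^k) \<le> real_of_int \<bar>A\<bar>" using k(2) by (simp only: of_int_le_iff)
    then show ?thesis by simp
  qed
  then have "real k \<le> log 2 \<bar>A\<bar>"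
    using le_log_of_power[of 2 k "real_of_int \<bar>A\<bar>"] by simp
  then have "real (length (filter (\<lambda>t. t \<in> Gs N \<gamma>) \<tau>s)) \<le> log 2 \<bar>A\<bar>"
    using t(3) by (meson of_nat_le_iff order_trans)
  then show ?thesis using t(1,2) unfolding Gens0_def Gs_def by blast
qed

end
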